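(* Let $N\ge2$ and let $\mathbb{P}_N$ be the path graph on servers $S_1,\dots,S_N$ (edges $\{S_i,S_{i+1}\}$, $i\in[N-1]$). Then for every $r\ge1$, $$\mathscr{C}\left(\mathbb{P}_N^{(r)}\right)\ \ge\ \frac{2}{N}\cdot\frac{1}{2-\frac{1}{2^{r-1}}}.$$
   Context: Multigraph-based PIR model. There are $N$ non-colluding servers $S_1,\dots,S_N$. For a simple graph $G$ on these servers with $K'$ edges, $G^{(r)}$ is the $r$-multigraph obtained by replacing each edge by $r$ parallel edges. There are $K=rK'$ files, each independent and uniform on $\mathbb{F}_2^{L}$; for each edge of $G$, a distinct set of $r$ files is stored exactly on its two endpoints. In a PIR scheme, a user privately chooses a desired file index $\theta$ and generates queries $Q_1,\dots,Q_N$ independent of all files; answer $A_i$ is a deterministic function of $Q_i$ and the files on $S_i$. Reliability: $W_\theta$ is a function of all answers and queries. Privacy: for every server $i$ and every $\theta$, the distribution of $(Q_i^{(\theta)},A_i^{(\theta)},\text{files on }S_i)$ does not depend on $\theta$. The rate is $L/\sum_i H(A_i)$ and the capacity $\mathscr{C}(G^{(r)})$ is the supremum of rates over all schemes, with $L$ arbitrarily large. *)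

theory Defs
  imports "HOL-Probability.Probability"
begin

text \<open>Servers are indexed 0,...,N-1 (S_1,...,S_N).
  A simple graph G is given by its list of edges E (pairs of server indices);
  K' = length E. In the r-multigraph each edge e gets r files, namely the files
  with indices k in [e*r, (e+1)*r); file k is stored exactly on the two endpoints
  of edge E!(k div r). A file is a bit string of length L (an element of F_2^L).\<close>

definition num_files :: "(nat \<times> nat) list \<Rightarrow> nat \<Rightarrow> nat" where
  "num_files E r = r * length E"

definition stored :: "(nat \<times> nat) list \<Rightarrow> nat \<Rightarrow> nat \<Rightarrow> nat \<Rightarrow> bool" where
  "stored E r k i \<longleftrightarrow> k < num_files E r \<and>
     (i = fst (E ! (k div r)) \<or> i = snd (E ! (k div r)))"

definition file_space :: "nat \<Rightarrow> nat \<Rightarrow> (nat \<Rightarrow> bool list) set" where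
  "file_space K L = PiE {0..<K} (\<lambda>_. {xs. length xs = L})"

definition files_pmf :: "nat \<Rightarrow> nat \<Rightarrow> (nat \<Rightarrow> bool list) pmf" where
  "files_pmf K L = pmf_of_set (file_space K L)"

definition entropy2 :: "'a pmf \<Rightarrow> real" where
  "entropy2 p = (\<Sum>x\<in>set_pmf p. - pmf p x * log 2 (pmf p x))"

text \<open>A scheme: Qd \<theta> is the joint distribution of the query tuple (Q_0,...,Q_{N-1})
  (components at indices \<ge> N are fixed to 0) for desired file \<theta>; it is sampled
  independently of the files. Ans i q W is the answer of server i to query q.
  Dec \<theta> q a is the user's decoder from all queries and all answers.\<close>

definition joint_pmf ::
  "nat \<Rightarrow> nat \<Rightarrow> (nat \<Rightarrow> (nat \<Rightarrow> nat) pmf) \<Rightarrow> nat \<Rightarrow> ((nat \<Rightarrow> nat) \<times> (nat \<Rightarrow> bool list)) pmf" where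
  "joint_pmf K L Qd \<theta> = pair_pmf (Qd \<theta>) (files_pmf K L)"

definition answer_pmf ::
  "nat \<Rightarrow> nat \<Rightarrow> (nat \<Rightarrow> (nat \<Rightarrow> nat) pmf) \<Rightarrow> (nat \<Rightarrow> nat \<Rightarrow> (nat \<Rightarrow> bool list) \<Rightarrow> nat)
   \<Rightarrow> nat \<Rightarrow> nat \<Rightarrow> nat pmf" where
  "answer_pmf K L Qd Ans i \<theta> = map_pmf (\<lambda>(q, W). Ans i (q i) W) (joint_pmf K L Qd \<theta>)"

definition server_view ::
  "(nat \<times> nat) list \<Rightarrow> nat \<Rightarrow> nat \<Rightarrow> (nat \<Rightarrow> (nat \<Rightarrow> nat) pmf)
   \<Rightarrow> (nat \<Rightarrow> nat \<Rightarrow> (nat \<Rightarrow> bool list) \<Rightarrow> nat) \<Rightarrow> nat \<Rightarrow> nat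
   \<Rightarrow> (nat \<times> nat \<times> (nat \<Rightarrow> bool list)) pmf" where
  "server_view E r L Qd Ans i \<theta> =
     map_pmf (\<lambda>(q, W). (q i, Ans i (q i) W, \<lambda>k. if stored E r k i then W k else []))
       (joint_pmf (num_files E r) L Qd \<theta>)"

definition pir_scheme ::
  "nat \<Rightarrow> (nat \<times> nat) list \<Rightarrow> nat \<Rightarrow> nat \<Rightarrow> (nat \<Rightarrow> (nat \<Rightarrow> nat) pmf)
   \<Rightarrow> (nat \<Rightarrow> nat \<Rightarrow> (nat \<Rightarrow> bool list) \<Rightarrow> nat)
   \<Rightarrow> (nat \<Rightarrow> (nat \<Rightarrow> nat) \<Rightarrow> (nat \<Rightarrow> nat) \<Rightarrow> bool list) \<Rightarrow> bool" where
  "pir_scheme N E r L Qd Ans Dec \<longleftrightarrow>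
     (let K = num_files E r in
     \<comment> \<open>finitely many possible query tuples; only servers 0..N-1 get queries\<close>
     (\<forall>\<theta><K. finite (set_pmf (Qd \<theta>)) \<and> (\<forall>q\<in>set_pmf (Qd \<theta>). \<forall>i\<ge>N. q i = 0)) \<and>
     \<comment> \<open>answer of server i depends only on its query and the files it stores\<close>
     (\<forall>i<N. \<forall>q. \<forall>W\<in>file_space K L. \<forall>W'\<in>file_space K L.
        (\<forall>k. stored E r k i \<longrightarrow> W k = W' k) \<longrightarrow> Ans i q W = Ans i q W') \<and>
     \<comment> \<open>reliability (zero error): W_\<theta> is a function of all queries and answers\<close>
     (\<forall>\<theta><K. \<forall>q\<in>set_pmf (Qd \<theta>). \<forall>W\<in>file_space K L.
        Dec \<theta> q (\<lambda>i. if i < N then Ans i (q i) W else 0) = W \<theta>) \<and>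
     \<comment> \<open>privacy\<close>
     (\<forall>i<N. \<forall>\<theta><K. \<forall>\<theta>'<K. server_view E r L Qd Ans i \<theta> = server_view E r L Qd Ans i \<theta>'))"

text \<open>Rate L / sum_i H(A_i). By privacy H(A_i) does not depend on \<theta>;
  we take the worst case over \<theta> (which is the same value).\<close>
definition pir_rate ::
  "nat \<Rightarrow> (nat \<times> nat) list \<Rightarrow> nat \<Rightarrow> nat \<Rightarrow> (nat \<Rightarrow> (nat \<Rightarrow> nat) pmf)
   \<Rightarrow> (nat \<Rightarrow> nat \<Rightarrow> (nat \<Rightarrow> bool list) \<Rightarrow> nat) \<Rightarrow> real" where
  "pir_rate N E r L Qd Ans =
     real L / (MAX \<theta>\<in>{0..<num_files E r}.
                 (\<Sum>i<N. entropy2 (answer_pmf (num_files E r) L Qd Ans i \<theta>)))"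

definition pir_capacity :: "nat \<Rightarrow> (nat \<times> nat) list \<Rightarrow> nat \<Rightarrow> ereal" where
  "pir_capacity N E r = Sup {ereal (pir_rate N E r L Qd Ans) | L Qd Ans Dec.
       L > 0 \<and> pir_scheme N E r L Qd Ans Dec}"

definition path_edges :: "nat \<Rightarrow> (nat \<times> nat) list" where
  "path_edges N = map (\<lambda>i. (i, Suc i)) [0..<N - 1]"

end

theory Submission imports Defs "HOL-Library.Z2" begin

section \<open>Entropy bounds\<close>

lemma entropy2_le_log_card:
  fixes p :: "'a pmf"
  assumes fin: "finite (set_pmf p)"
  shows "entropy2 p \<le> log 2 (real (card (set_pmf p)))"
proof -
  let ?S = "set_pmf p"
  let ?n = "real (card ?S)"
  have ne: "?S \<noteq> {}" by (simp add: set_pmf_not_empty)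
  have npos: "?n > 0" using fin ne by (simp add: card_gt_0_iff)
  have sum1: "(\<Sum>x\<in>?S. pmf p x) = 1" using sum_pmf_eq_1[OF fin] by simp
  have pos: "\<And>x. x \<in> ?S \<Longrightarrow> pmf p x > 0" by (simp add: pmf_positive)
  have key: "\<And>x. x \<in> ?S \<Longrightarrow>
      - pmf p x * ln (pmf p x) - pmf p x * ln ?n \<le> 1 / ?n - pmf p x"
  proof -
    fix x assume x: "x \<in> ?S"
    have px: "pmf p x > 0" using pos x .
    have "ln (1 / (pmf p x * ?n)) \<le> 1 / (pmf p x * ?n) - 1"
      using px npos by (intro ln_le_minus_one) simp
    then have "pmf p x * ln (1 / (pmf p x * ?n)) \<le> pmf p x * (1 / (pmf p x * ?n) - 1)"
      using px by (simp add: mult_left_mono)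
    moreover have "ln (1 / (pmf p x * ?n)) = - ln (pmf p x) - ln ?n"
      using px npos by (simp add: ln_div ln_mult)
    moreover have "pmf p x * (1 / (pmf p x * ?n) - 1) = 1 / ?n - pmf p x"
      using px npos by (simp add: field_simps)
    ultimately show "- pmf p x * ln (pmf p x) - pmf p x * ln ?n \<le> 1 / ?n - pmf p x"
      by (simp add: algebra_simps)
  qed
  have "(\<Sum>x\<in>?S. - pmf p x * ln (pmf p x) - pmf p x * ln ?n) \<le> (\<Sum>x\<in>?S. 1 / ?n - pmf p x)"
    by (rule sum_mono) (rule key)
  also have "\<dots> = 0" using sum1 npos by (simp add: sum_subtractf)
  finally have A: "(\<Sum>x\<in>?S. - pmf p x * ln (pmf p x)) \<le> ln ?n"
    using sum1 by (simp add: sum_subtractf sum_distrib_right[symmetric])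
  have "entropy2 p = (\<Sum>x\<in>?S. - pmf p x * ln (pmf p x)) / ln 2"
    unfolding entropy2_def log_def by (simp add: sum_divide_distrib)
  also have "\<dots> \<le> ln ?n / ln 2" using A by (simp add: divide_right_mono)
  finally show ?thesis by (simp add: log_def)
qed

lemma entropy2_nonneg_term:
  fixes p :: "'a pmf"
  shows "0 \<le> - pmf p x * log 2 (pmf p x)"
proof (cases "pmf p x = 0")
  case True then show ?thesis by simp
next
  case False
  then have "0 < pmf p x" using pmf_nonneg[of p x] by linarith
  moreover have "pmf p x \<le> 1" by (rule pmf_le_1)
  ultimately have "log 2 (pmf p x) \<le> 0" by simp
  then show ?thesis using \<open>0 < pmf p x\<close> by (simp add: mult_nonneg_nonpos)
qed

lemma entropy2_nonneg: "0 \<le> entropy2 p"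
  unfolding entropy2_def by (intro sum_nonneg entropy2_nonneg_term)

lemma entropy2_pos:
  fixes p :: "'a pmf"
  assumes fin: "finite (set_pmf p)" and x: "x \<in> set_pmf p" and y: "y \<in> set_pmf p" and xy: "x \<noteq> y"
  shows "0 < entropy2 p"
  unfolding entropy2_def
proof (rule sum_pos2[OF fin x])
  have px: "pmf p x > 0" "pmf p y > 0" using x y by (simp_all add: pmf_positive)
  have "(\<Sum>z\<in>{x,y}. pmf p z) \<le> 1"
    using measure_pmf.prob_le_1[of p "{x,y}"] by (simp add: measure_measure_pmf_finite)
  then have "pmf p x < 1" using px xy by simp
  then have "log 2 (pmf p x) < 0" using px by simp
  then show "0 < - pmf p x * log 2 (pmf p x)" using px by (simp add: mult_pos_neg)
  show "\<And>i. i \<in> set_pmf p \<Longrightarrow> 0 \<le> - pmf p i * log 2 (pmf p i)" by (rule entropy2_nonneg_term)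
qed

section \<open>Subsets and permutations\<close>

definition Sub :: "nat \<Rightarrow> nat set set" where "Sub r = Pow {..<r}"
definition NE :: "nat \<Rightarrow> nat set set" where "NE r = Sub r - {{}}"
definition Perms :: "nat \<Rightarrow> (nat set \<Rightarrow> nat) set" where
  "Perms r = {\<sigma> \<in> Sub r \<rightarrow>\<^sub>E {..<(2::nat)^r}. bij_betw \<sigma> (Sub r) {..<(2::nat)^r}}"
definition QSet :: "nat \<Rightarrow> ((nat set \<Rightarrow> nat) \<times> (nat set \<Rightarrow> nat)) set" where
  "QSet r = Perms r \<times> Perms r"
definition VecSet :: "nat \<Rightarrow> (nat set \<Rightarrow> bit) set" where
  "VecSet r = NE r \<rightarrow>\<^sub>E (UNIV :: bit set)"
definition Gset :: "nat \<Rightarrow> nat \<Rightarrow> (nat \<Rightarrow> nat set \<Rightarrow> nat) set" where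
  "Gset N r = {..<N-1} \<rightarrow>\<^sub>E Perms r"
definition sdk :: "nat \<Rightarrow> nat set \<Rightarrow> nat set" where
  "sdk k T = (T - {k}) \<union> ({k} - T)"
definition shift :: "nat \<Rightarrow> nat \<Rightarrow> (nat set \<Rightarrow> nat) \<Rightarrow> (nat set \<Rightarrow> nat)" where
  "shift r k \<sigma> = restrict (\<sigma> \<circ> sdk k) (Sub r)"

lemma sdk_sdk[simp]: "sdk k (sdk k T) = T"
  unfolding sdk_def by auto

lemma sdk_Sub: "T \<in> Sub r \<Longrightarrow> k < r \<Longrightarrow> sdk k T \<in> Sub r"
  unfolding sdk_def Sub_def by auto

lemma finite_Sub[simp]: "finite (Sub r)" unfolding Sub_def by simp
lemma card_Sub: "card (Sub r) = 2 ^ r" unfolding Sub_def by (simp add: card_Pow)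

lemma Perms_nonempty: "\<exists>\<sigma>. \<sigma> \<in> Perms r"
proof -
  have c: "card (Sub r) = card {..<(2::nat)^r}" by (simp add: card_Sub)
  obtain f where f: "bij_betw f (Sub r) {..<(2::nat)^r}"
    using finite_same_card_bij[OF finite_Sub finite_lessThan c] by blast
  let ?g = "restrict f (Sub r)"
  have "bij_betw ?g (Sub r) {..<(2::nat)^r}"
    using f by (simp only: bij_betw_restrict_eq)
  moreover have "?g \<in> Sub r \<rightarrow>\<^sub>E {..<(2::nat)^r}"
    unfolding restrict_PiE_iff using bij_betw_apply[OF f] by blast
  ultimately show ?thesis unfolding Perms_def by blast
qed

lemma finite_Perms[simp]: "finite (Perms r)"
proof -
  have "finite (Sub r \<rightarrow>\<^sub>E {..<(2::nat)^r})" by (simp add: finite_PiE)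
  moreover have "Perms r \<subseteq> Sub r \<rightarrow>\<^sub>E {..<(2::nat)^r}" unfolding Perms_def by blast
  ultimately show ?thesis by (rule rev_finite_subset)
qed

lemma bij_sdk: "k < r \<Longrightarrow> bij_betw (sdk k) (Sub r) (Sub r)"
proof (rule bij_betw_byWitness[where f'="sdk k"])
  assume k: "k < r"
  show "\<forall>a\<in>Sub r. sdk k (sdk k a) = a" by simp
  show "\<forall>a\<in>Sub r. sdk k (sdk k a) = a" by simp
  show "sdk k ` Sub r \<subseteq> Sub r" using sdk_Sub[OF _ k] by blast
  show "sdk k ` Sub r \<subseteq> Sub r" using sdk_Sub[OF _ k] by blast
qed

lemma shift_Perms: assumes "\<sigma> \<in> Perms r" "k < r" shows "shift r k \<sigma> \<in> Perms r"
proof -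
  have b: "bij_betw \<sigma> (Sub r) {..<(2::nat)^r}" using assms unfolding Perms_def by blast
  have bb: "bij_betw (\<sigma> \<circ> sdk k) (Sub r) {..<(2::nat)^r}"
    by (rule bij_betw_trans[OF bij_sdk[OF assms(2)] b])
  then have "bij_betw (shift r k \<sigma>) (Sub r) {..<(2::nat)^r}"
    unfolding shift_def by (simp only: bij_betw_restrict_eq)
  moreover have "shift r k \<sigma> \<in> Sub r \<rightarrow>\<^sub>E {..<(2::nat)^r}"
    unfolding shift_def restrict_PiE_iff using bij_betw_apply[OF bb] by blast
  ultimately show ?thesis unfolding Perms_def by blast
qed

lemma shift_apply: "T \<in> Sub r \<Longrightarrow> shift r k \<sigma> T = \<sigma> (sdk k T)"
  unfolding shift_def by simp

lemma shift_shift: assumes "\<sigma> \<in> Perms r" "k < r" shows "shift r k (shift r k \<sigma>) = \<sigma>"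
proof
  fix T
  have e: "\<sigma> \<in> extensional (Sub r)" using assms unfolding Perms_def PiE_def by blast
  show "shift r k (shift r k \<sigma>) T = \<sigma> T"
  proof (cases "T \<in> Sub r")
    case True
    then have "sdk k T \<in> Sub r" using sdk_Sub assms(2) by blast
    then show ?thesis using True by (simp add: shift_apply)
  next
    case False
    then have "\<sigma> T = undefined" using e by (simp add: extensional_def)
    moreover have "shift r k (shift r k \<sigma>) T = undefined" using False unfolding shift_def by simp
    ultimately show ?thesis by simp
  qed
qed

lemma bit_add_self[simp]: "(x::bit) + x = 0" by (cases x) auto

lemma sum_sdk:
  fixes f :: "nat \<Rightarrow> bit"
  assumes "finite U"
  shows "sum f U + sum f (sdk k U) = f k"
proof (cases "k \<in> U")
  case True
  then have "sdk k U = U - {k}" unfolding sdk_def by auto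
  moreover have "sum f U = f k + sum f (U - {k})" using sum.remove[OF assms True, of f] .
  ultimately have "sum f U + sum f (sdk k U) = f k + (sum f (U - {k}) + sum f (U - {k}))"
    by (simp only: add.assoc)
  then show ?thesis by (simp only: bit_add_self add_0_right)
next
  case False
  then have "sdk k U = insert k U" unfolding sdk_def by auto
  then have "sum f (sdk k U) = f k + sum f U" using sum.insert[OF assms False, of f] by (simp only:)
  then have "sum f U + sum f (sdk k U) = f k + (sum f U + sum f U)"
    by (simp only: add.left_commute)
  then show ?thesis by (simp only: bit_add_self add_0_right)
qed

section \<open>The scheme\<close>

definition s0 :: "nat \<Rightarrow> nat set \<Rightarrow> nat" where "s0 r = (SOME \<sigma>. \<sigma> \<in> Perms r)"
definition rho :: "nat \<Rightarrow> nat \<Rightarrow> (nat \<Rightarrow> nat set \<Rightarrow> nat) \<Rightarrow> nat \<Rightarrow> nat set \<Rightarrow> nat" where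
  "rho r \<theta> g e = (if e = \<theta> div r then shift r (\<theta> mod r) (g e) else g e)"
definition lq :: "nat \<Rightarrow> nat \<Rightarrow> (nat \<Rightarrow> nat set \<Rightarrow> nat) \<Rightarrow> nat \<Rightarrow> nat set \<Rightarrow> nat" where
  "lq r \<theta> g i = (if i = 0 then s0 r else rho r \<theta> g (i - 1))"
definition lq0 :: "nat \<Rightarrow> (nat \<Rightarrow> nat set \<Rightarrow> nat) \<Rightarrow> nat \<Rightarrow> nat set \<Rightarrow> nat" where
  "lq0 r g i = (if i = 0 then s0 r else g (i - 1))"
definition rq :: "nat \<Rightarrow> nat \<Rightarrow> (nat \<Rightarrow> nat set \<Rightarrow> nat) \<Rightarrow> nat \<Rightarrow> nat set \<Rightarrow> nat" where
  "rq N r g i = (if i < N - 1 then g i else s0 r)"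
definition Qfun :: "nat \<Rightarrow> nat \<Rightarrow> nat \<Rightarrow> (nat \<Rightarrow> nat set \<Rightarrow> nat) \<Rightarrow> nat \<Rightarrow> nat" where
  "Qfun N r \<theta> g = (\<lambda>i. if i < N then to_nat_on (QSet r) (lq r \<theta> g i, rq N r g i) else 0)"
definition Qb :: "nat \<Rightarrow> nat \<Rightarrow> (nat \<Rightarrow> nat set \<Rightarrow> nat) \<Rightarrow> nat \<Rightarrow> nat" where
  "Qb N r g = (\<lambda>i. if i < N then to_nat_on (QSet r) (lq0 r g i, rq N r g i) else 0)"
definition Qd :: "nat \<Rightarrow> nat \<Rightarrow> nat \<Rightarrow> (nat \<Rightarrow> nat) pmf" where
  "Qd N r \<theta> = map_pmf (Qfun N r \<theta>) (pmf_of_set (Gset N r))"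
definition bz :: "bool \<Rightarrow> bit" where "bz b = (if b then 1 else 0)"
definition Pv :: "nat \<Rightarrow> nat \<Rightarrow> (nat set \<Rightarrow> nat) \<Rightarrow> nat set \<Rightarrow> (nat \<Rightarrow> bool list) \<Rightarrow> bit" where
  "Pv r e \<sigma> T W = (\<Sum>k\<in>T. bz (W (r * e + k) ! \<sigma> T))"
definition avec :: "nat \<Rightarrow> nat \<Rightarrow> nat \<Rightarrow> (nat set \<Rightarrow> nat) \<Rightarrow> (nat set \<Rightarrow> nat) \<Rightarrow> (nat \<Rightarrow> bool list) \<Rightarrow> nat set \<Rightarrow> bit" where
  "avec N r i \<sigma>L \<sigma>R W = restrict (\<lambda>T. (if 0 < i then Pv r (i - 1) \<sigma>L T W else 0)
       + (if i < N - 1 then Pv r i \<sigma>R T W else 0)) (NE r)"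
definition Ans :: "nat \<Rightarrow> nat \<Rightarrow> nat \<Rightarrow> nat \<Rightarrow> (nat \<Rightarrow> bool list) \<Rightarrow> nat" where
  "Ans N r i q W = to_nat_on (VecSet r)
     (avec N r i (fst (from_nat_into (QSet r) q)) (snd (from_nat_into (QSet r) q)) W)"
definition Dec :: "nat \<Rightarrow> nat \<Rightarrow> nat \<Rightarrow> (nat \<Rightarrow> nat) \<Rightarrow> (nat \<Rightarrow> nat) \<Rightarrow> bool list" where
  "Dec N r \<theta> q a = (SOME w. \<exists>W\<in>file_space (num_files (path_edges N) r) (2^r).
      (\<lambda>i. if i < N then Ans N r i (q i) W else 0) = a \<and> w = W \<theta>)"

lemma s0_Perms: "s0 r \<in> Perms r"
  unfolding s0_def using Perms_nonempty by (metis someI_ex)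

lemma finite_Gset[simp]: "finite (Gset N r)"
  unfolding Gset_def by (simp add: finite_PiE)

lemma Gset_nonempty: "Gset N r \<noteq> {}"
  unfolding Gset_def using Perms_nonempty by (simp add: PiE_eq_empty_iff) blast

lemma Gset_mem: "g \<in> Gset N r \<Longrightarrow> e < N - 1 \<Longrightarrow> g e \<in> Perms r"
  unfolding Gset_def by (simp add: PiE_iff)

lemma rho_Perms: "g \<in> Gset N r \<Longrightarrow> e < N - 1 \<Longrightarrow> 0 < r \<Longrightarrow> rho r \<theta> g e \<in> Perms r"
  unfolding rho_def using Gset_mem shift_Perms by simp

lemma lq_Perms: "g \<in> Gset N r \<Longrightarrow> i < N \<Longrightarrow> 0 < r \<Longrightarrow> lq r \<theta> g i \<in> Perms r"
  unfolding lq_def using rho_Perms[of g N r "i - 1" \<theta>] s0_Perms by auto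

lemma lq0_Perms: "g \<in> Gset N r \<Longrightarrow> i < N \<Longrightarrow> lq0 r g i \<in> Perms r"
  unfolding lq0_def using Gset_mem[of g N r "i - 1"] s0_Perms by auto

lemma rq_Perms: "g \<in> Gset N r \<Longrightarrow> rq N r g i \<in> Perms r"
  unfolding rq_def using Gset_mem s0_Perms by auto

lemma countable_QSet[simp]: "countable (QSet r)"
  unfolding QSet_def by (intro countable_finite) simp

lemma finite_NE[simp]: "finite (NE r)" unfolding NE_def by simp

lemma bit_UNIV: "(UNIV :: bit set) = {0, 1}" by (auto intro: bit.exhaust)

lemma finite_bit_UNIV[simp]: "finite (UNIV :: bit set)" by (simp add: bit_UNIV)

lemma finite_VecSet[simp]: "finite (VecSet r)"
  unfolding VecSet_def by (simp add: finite_PiE)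

lemma vec_VecSet: "avec N r i \<sigma>L \<sigma>R W \<in> VecSet r"
  unfolding avec_def VecSet_def restrict_PiE_iff by simp

lemma Ans_Qfun:
  assumes "g \<in> Gset N r" "i < N" "0 < r"
  shows "Ans N r i (Qfun N r \<theta> g i) W = to_nat_on (VecSet r) (avec N r i (lq r \<theta> g i) (rq N r g i) W)"
proof -
  have "(lq r \<theta> g i, rq N r g i) \<in> QSet r"
    unfolding QSet_def using lq_Perms[OF assms] rq_Perms[OF assms(1)] by simp
  then show ?thesis unfolding Ans_def Qfun_def using assms(2) by simp
qed

section \<open>Decoding\<close>

lemma bz_inj: "bz a = bz b \<Longrightarrow> a = b"
  unfolding bz_def by (cases a; cases b) auto

lemma Pv_single: "Pv r e \<sigma> {k} W = bz (W (r * e + k) ! \<sigma> {k})"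
  unfolding Pv_def by simp

lemma bit_formula:
  assumes \<sigma>: "\<sigma> \<in> Perms r" and k0: "k0 < r" and U: "U \<in> Sub r" and j: "\<sigma> U = j"
  shows "U = {k0} \<Longrightarrow> bz (W (r * e + k0) ! j) = Pv r e \<sigma> {k0} W"
    and "U = {} \<Longrightarrow> bz (W (r * e + k0) ! j) = Pv r e (shift r k0 \<sigma>) {k0} W"
    and "U \<noteq> {} \<Longrightarrow> U \<noteq> {k0} \<Longrightarrow>
          bz (W (r * e + k0) ! j) = Pv r e \<sigma> U W + Pv r e (shift r k0 \<sigma>) (sdk k0 U) W"
proof -
  show "U = {k0} \<Longrightarrow> bz (W (r * e + k0) ! j) = Pv r e \<sigma> {k0} W"
    using j by (simp add: Pv_single)
  have s1: "{k0} \<in> Sub r" using k0 unfolding Sub_def by simp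
  show "U = {} \<Longrightarrow> bz (W (r * e + k0) ! j) = Pv r e (shift r k0 \<sigma>) {k0} W"
    using j s1 by (simp add: Pv_single shift_apply sdk_def)
  assume "U \<noteq> {}" "U \<noteq> {k0}"
  have sU: "sdk k0 U \<in> Sub r" using sdk_Sub[OF U k0] .
  have fU: "finite U" using U unfolding Sub_def by (auto intro: finite_subset)
  have "Pv r e (shift r k0 \<sigma>) (sdk k0 U) W = (\<Sum>k\<in>sdk k0 U. bz (W (r * e + k) ! j))"
    unfolding Pv_def using sU j by (simp add: shift_apply)
  moreover have "Pv r e \<sigma> U W = (\<Sum>k\<in>U. bz (W (r * e + k) ! j))"
    unfolding Pv_def using j by simp
  ultimately show "bz (W (r * e + k0) ! j) = Pv r e \<sigma> U W + Pv r e (shift r k0 \<sigma>) (sdk k0 U) W"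
    using sum_sdk[OF fU, of "\<lambda>k. bz (W (r * e + k) ! j)" k0] by simp
qed

lemma decode_unique:
  assumes N: "2 \<le> N" and r: "0 < r" and th: "\<theta> < r * (N - 1)" and g: "g \<in> Gset N r"
    and WL: "length (W \<theta>) = 2 ^ r" and WL': "length (W' \<theta>) = 2 ^ r"
    and eq: "\<forall>i<N. Ans N r i (Qfun N r \<theta> g i) W = Ans N r i (Qfun N r \<theta> g i) W'"
  shows "W \<theta> = W' \<theta>"
proof -
  define e0 where "e0 = \<theta> div r"
  define k0 where "k0 = \<theta> mod r"
  have k0r: "k0 < r" unfolding k0_def using r by simp
  have thd: "\<theta> = r * e0 + k0" unfolding e0_def k0_def by simp
  have e0N: "e0 < N - 1" unfolding e0_def using th r
    by (simp add: less_mult_imp_div_less mult.commute)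
  have veq: "avec N r i (lq r \<theta> g i) (rq N r g i) W = avec N r i (lq r \<theta> g i) (rq N r g i) W'"
    if "i < N" for i
  proof -
    have "to_nat_on (VecSet r) (avec N r i (lq r \<theta> g i) (rq N r g i) W)
        = to_nat_on (VecSet r) (avec N r i (lq r \<theta> g i) (rq N r g i) W')"
      using eq that Ans_Qfun[OF g that r] by metis
    then show ?thesis using inj_on_to_nat_on[of "VecSet r"] vec_VecSet
      by (simp add: inj_on_eq_iff countable_finite)
  qed
  define X where "X i T V = (if 0 < i then Pv r (i - 1) (lq r \<theta> g i) T V else 0)
       + (if i < N - 1 then Pv r i (rq N r g i) T V else 0)" for i T V
  have Xeq: "X i T W = X i T W'" if "i < N" "T \<in> NE r" for i T
    using fun_cong[OF veq[OF that(1)], of T] that(2) unfolding avec_def X_def by (simp only: restrict_apply')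
  have X0: "X 0 T V = Pv r 0 (g 0) T V" for T V
    unfolding X_def rq_def using N by simp
  have Xmid: "X i T V = Pv r (i - 1) (lq r \<theta> g i) T V + Pv r i (g i) T V"
    if "0 < i" "i < N - 1" for i T V
    unfolding X_def rq_def using that by simp
  have Xlast: "X (N - 1) T V = Pv r (N - 2) (lq r \<theta> g (N - 1)) T V" for T V
  proof -
    have "N - 1 - 1 = N - 2" by simp
    then show ?thesis unfolding X_def rq_def using N by simp
  qed
  have lqg: "lq r \<theta> g (Suc n) = g n" if "n \<noteq> e0" for n
    unfolding lq_def rho_def e0_def using that e0_def by simp
  have left: "\<forall>T\<in>NE r. Pv r n (g n) T W = Pv r n (g n) T W'" if "n \<le> e0" for n
    using that
  proof (induction n)
    case 0
    show ?case
    proof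
      fix T assume T: "T \<in> NE r"
      have "X 0 T W = X 0 T W'" using Xeq[OF _ T] N by simp
      then show "Pv r 0 (g 0) T W = Pv r 0 (g 0) T W'" by (simp only: X0)
    qed
  next
    case (Suc m)
    have IH: "\<forall>T\<in>NE r. Pv r m (g m) T W = Pv r m (g m) T W'"
      using Suc by simp
    show ?case
    proof
      fix T assume T: "T \<in> NE r"
      have "X (Suc m) T W = X (Suc m) T W'" using Xeq[OF _ T] Suc(2) e0N by simp
      moreover have "m \<noteq> e0" using Suc(2) by simp
      moreover have "Suc m < N - 1" using Suc(2) e0N by simp
      ultimately have "Pv r m (g m) T W + Pv r (Suc m) (g (Suc m)) T W
          = Pv r m (g m) T W' + Pv r (Suc m) (g (Suc m)) T W'"
        using Xmid[of "Suc m"] lqg[of m] by simp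
      then show "Pv r (Suc m) (g (Suc m)) T W = Pv r (Suc m) (g (Suc m)) T W'"
        using IH T by (metis add_left_cancel)
    qed
  qed
  have right0: "e0 \<le> n \<longrightarrow> (\<forall>T\<in>NE r. Pv r n (rho r \<theta> g n) T W = Pv r n (rho r \<theta> g n) T W')"
    if "n \<le> N - 2" for n
    using that
  proof (induction n rule: inc_induct)
    case base
    show ?case
    proof (intro impI ballI)
      fix T assume T: "T \<in> NE r"
      have "X (N - 1) T W = X (N - 1) T W'" using Xeq[OF _ T] N by simp
      moreover have "lq r \<theta> g (N - 1) = rho r \<theta> g (N - 2)" unfolding lq_def using N
        by (simp add: numeral_2_eq_2)
      ultimately show "Pv r (N - 2) (rho r \<theta> g (N - 2)) T W = Pv r (N - 2) (rho r \<theta> g (N - 2)) T W'"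
        by (simp only: Xlast)
    qed
  next
    case (step n)
    show ?case
    proof (intro impI ballI)
      fix T assume ne: "e0 \<le> n" and T: "T \<in> NE r"
      have "X (Suc n) T W = X (Suc n) T W'" using Xeq[OF _ T] step N by simp
      moreover have "rho r \<theta> g (Suc n) = g (Suc n)" using ne unfolding rho_def e0_def by simp
      moreover have "Suc n < N - 1" using step by simp
      moreover have "lq r \<theta> g (Suc n) = rho r \<theta> g n" unfolding lq_def by simp
      ultimately have "Pv r n (rho r \<theta> g n) T W + Pv r (Suc n) (rho r \<theta> g (Suc n)) T W
          = Pv r n (rho r \<theta> g n) T W' + Pv r (Suc n) (rho r \<theta> g (Suc n)) T W'"
        using Xmid[of "Suc n"] by simp
      then show "Pv r n (rho r \<theta> g n) T W = Pv r n (rho r \<theta> g n) T W'"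
        using step.IH T ne by (metis add_right_cancel le_SucI)
    qed
  qed
  have right: "\<forall>T\<in>NE r. Pv r n (rho r \<theta> g n) T W = Pv r n (rho r \<theta> g n) T W'"
    if "e0 \<le> n" "n \<le> N - 2" for n
    using right0[OF that(2)] that(1) by blast
  define \<sigma> where "\<sigma> = g e0"
  have \<sigma>P: "\<sigma> \<in> Perms r" unfolding \<sigma>_def using Gset_mem[OF g e0N] .
  have rhoe0: "rho r \<theta> g e0 = shift r k0 \<sigma>" unfolding rho_def \<sigma>_def e0_def k0_def by simp
  have L: "\<forall>T\<in>NE r. Pv r e0 \<sigma> T W = Pv r e0 \<sigma> T W'" using left[of e0] unfolding \<sigma>_def by simp
  have R: "\<forall>T\<in>NE r. Pv r e0 (shift r k0 \<sigma>) T W = Pv r e0 (shift r k0 \<sigma>) T W'"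
    using right[of e0] e0N rhoe0 by simp
  have bij: "bij_betw \<sigma> (Sub r) {..<(2::nat)^r}" using \<sigma>P unfolding Perms_def by blast
  have bits: "W \<theta> ! j = W' \<theta> ! j" if j: "j < 2 ^ r" for j
  proof -
    define U where "U = inv_into (Sub r) \<sigma> j"
    have U: "U \<in> Sub r" "\<sigma> U = j"
      using j bij unfolding U_def by (auto simp: bij_betw_def inv_into_into f_inv_into_f)
    have s1: "{k0} \<in> NE r" using k0r unfolding NE_def Sub_def by simp
    have "bz (W \<theta> ! j) = bz (W' \<theta> ! j)"
    proof (cases "U = {k0}")
      case True
      then show ?thesis using bit_formula(1)[OF \<sigma>P k0r U, where e=e0] L s1 thd by metis
    next
      case F1: False
      show ?thesis
      proof (cases "U = {}")
        case True
        then show ?thesis using bit_formula(2)[OF \<sigma>P k0r U, where e=e0] R s1 thd by metis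
      next
        case False
        have "U \<in> NE r" using False U unfolding NE_def by simp
        moreover have "sdk k0 U \<in> NE r" using F1 sdk_Sub[OF U(1) k0r] unfolding NE_def sdk_def by auto
        ultimately show ?thesis using bit_formula(3)[OF \<sigma>P k0r U False F1, where e=e0] L R thd by metis
      qed
    qed
    then show ?thesis by (rule bz_inj)
  qed
  show ?thesis using WL WL' bits by (intro nth_equalityI) auto
qed

section \<open>Locality\<close>

lemma length_path_edges[simp]: "length (path_edges N) = N - 1"
  unfolding path_edges_def by simp

lemma path_edges_nth: "e < N - 1 \<Longrightarrow> path_edges N ! e = (e, Suc e)"
  unfolding path_edges_def by simp

lemma stored_path:
  assumes r: "0 < r" and e: "e < N - 1" and k: "k < r"
  shows "stored (path_edges N) r (r * e + k) e" "stored (path_edges N) r (r * e + k) (Suc e)"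
proof -
  have d: "(r * e + k) div r = e" using r k by simp
  have "r * e + k < r * e + r" using k by simp
  also have "\<dots> = r * Suc e" by simp
  also have "\<dots> \<le> r * (N - 1)" using e by (intro mult_le_mono2) simp
  finally have lt: "r * e + k < num_files (path_edges N) r" unfolding num_files_def by simp
  show "stored (path_edges N) r (r * e + k) e" "stored (path_edges N) r (r * e + k) (Suc e)"
    unfolding stored_def using lt d path_edges_nth[OF e] by simp_all
qed

lemma Ans_local:
  assumes r: "0 < r" and i: "i < N" and agree: "\<forall>k. stored (path_edges N) r k i \<longrightarrow> W k = W' k"
  shows "Ans N r i q W = Ans N r i q W'"
proof -
  have "avec N r i \<sigma>L \<sigma>R W = avec N r i \<sigma>L \<sigma>R W'" for \<sigma>L \<sigma>R
  proof -
    have A: "0 < i \<Longrightarrow> Pv r (i - 1) \<sigma>L T W = Pv r (i - 1) \<sigma>L T W'" if T: "T \<in> NE r" for T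
    proof -
      assume i0: "0 < i"
      have "W (r * (i - 1) + k) = W' (r * (i - 1) + k)" if "k \<in> T" for k
      proof -
        have "k < r" using T that unfolding NE_def Sub_def by auto
        then have "stored (path_edges N) r (r * (i - 1) + k) (Suc (i - 1))"
          using stored_path(2)[OF r, of "i - 1" N k] i i0 by simp
        then show ?thesis using agree i0 by simp
      qed
      then show ?thesis unfolding Pv_def by (intro sum.cong) simp_all
    qed
    have B: "i < N - 1 \<Longrightarrow> Pv r i \<sigma>R T W = Pv r i \<sigma>R T W'" if T: "T \<in> NE r" for T
    proof -
      assume i1: "i < N - 1"
      have "W (r * i + k) = W' (r * i + k)" if "k \<in> T" for k
      proof -
        have "k < r" using T that unfolding NE_def Sub_def by auto
        then have "stored (path_edges N) r (r * i + k) i"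
          using stored_path(1)[OF r i1] by simp
        then show ?thesis using agree by simp
      qed
      then show ?thesis unfolding Pv_def by (intro sum.cong) simp_all
    qed
    show ?thesis unfolding avec_def
      by (intro restrict_ext) (simp only: A B cong: if_cong)
  qed
  then show ?thesis unfolding Ans_def by simp
qed

section \<open>Privacy\<close>

lemma map_pmf_of_set_invol:
  assumes fin: "finite A" and ne: "A \<noteq> {}" and mem: "\<And>x. x \<in> A \<Longrightarrow> f x \<in> A"
    and inv: "\<And>x. x \<in> A \<Longrightarrow> f (f x) = x"
  shows "map_pmf f (pmf_of_set A) = pmf_of_set A"
proof -
  have inj: "inj_on f A" by (metis inj_onI inv)
  have "f ` A = A"
  proof
    show "f ` A \<subseteq> A" using mem by blast
    show "A \<subseteq> f ` A" using mem inv by (metis image_eqI subsetI)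
  qed
  then show ?thesis using map_pmf_of_set_inj[OF inj ne fin] by simp
qed

lemma marg_eq:
  assumes N: "2 \<le> N" and r: "0 < r" and th: "\<theta> < r * (N - 1)" and i: "i < N"
  shows "map_pmf (\<lambda>q. q i) (Qd N r \<theta>) = map_pmf (\<lambda>g. Qb N r g i) (pmf_of_set (Gset N r))"
proof -
  define e0 where "e0 = \<theta> div r"
  define k0 where "k0 = \<theta> mod r"
  have k0r: "k0 < r" unfolding k0_def using r by simp
  have e0N: "e0 < N - 1" unfolding e0_def using th r
    by (simp add: less_mult_imp_div_less mult.commute)
  define phi where "phi g = g(e0 := shift r k0 (g e0))" for g :: "nat \<Rightarrow> nat set \<Rightarrow> nat"
  define psi where "psi = (if i = Suc e0 then phi else id)"
  have phi_mem: "phi g \<in> Gset N r" if "g \<in> Gset N r" for g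
    using that Gset_mem[OF that e0N] shift_Perms[OF _ k0r] e0N
    unfolding phi_def Gset_def by (auto simp: PiE_iff extensional_def)
  have phi_inv: "phi (phi g) = g" if "g \<in> Gset N r" for g
    using shift_shift[OF Gset_mem[OF that e0N] k0r] unfolding phi_def by simp
  have psi_pmf: "map_pmf psi (pmf_of_set (Gset N r)) = pmf_of_set (Gset N r)"
  proof (cases "i = Suc e0")
    case True
    then show ?thesis unfolding psi_def
      using map_pmf_of_set_invol[OF finite_Gset Gset_nonempty phi_mem phi_inv] by simp
  next
    case False
    then show ?thesis unfolding psi_def by (simp add: pmf.map_id)
  qed
  have key: "Qfun N r \<theta> g i = Qb N r (psi g) i" if g: "g \<in> Gset N r" for g
  proof (cases "i = Suc e0")
    case True
    have "lq r \<theta> g i = lq0 r (phi g) i" using True unfolding lq_def lq0_def rho_def phi_def e0_def k0_def by simp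
    moreover have "rq N r g i = rq N r (phi g) i" using True unfolding rq_def phi_def by simp
    ultimately show ?thesis using True i unfolding Qfun_def Qb_def psi_def by simp
  next
    case False
    have "lq r \<theta> g i = lq0 r g i" using False unfolding lq_def lq0_def rho_def e0_def
      by (cases i) auto
    then show ?thesis using False i unfolding Qfun_def Qb_def psi_def by simp
  qed
  have "map_pmf (\<lambda>q. q i) (Qd N r \<theta>) = map_pmf (\<lambda>g. Qfun N r \<theta> g i) (pmf_of_set (Gset N r))"
    unfolding Qd_def by (simp add: pmf.map_comp o_def)
  also have "\<dots> = map_pmf (\<lambda>g. Qb N r (psi g) i) (pmf_of_set (Gset N r))"
    by (rule pmf.map_cong[OF refl]) (simp add: key finite_Gset Gset_nonempty)
  also have "\<dots> = map_pmf (\<lambda>g. Qb N r g i) (map_pmf psi (pmf_of_set (Gset N r)))"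
    by (simp add: pmf.map_comp o_def)
  also have "\<dots> = map_pmf (\<lambda>g. Qb N r g i) (pmf_of_set (Gset N r))" using psi_pmf by simp
  finally show ?thesis .
qed

lemma server_view_alt:
  "server_view E r L QQ AA i \<theta> =
     map_pmf (\<lambda>(x, W). (x, AA i x W, \<lambda>k. if stored E r k i then W k else []))
       (pair_pmf (map_pmf (\<lambda>q. q i) (QQ \<theta>)) (files_pmf (num_files E r) L))"
proof -
  have "pair_pmf (map_pmf (\<lambda>q. q i) (QQ \<theta>)) (files_pmf (num_files E r) L)
      = map_pmf (\<lambda>(q, W). (q i, W)) (pair_pmf (QQ \<theta>) (files_pmf (num_files E r) L))"
    using map_pair[of "\<lambda>q. q i" id "QQ \<theta>" "files_pmf (num_files E r) L"] by (simp add: pmf.map_id)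
  then show ?thesis unfolding server_view_def joint_pmf_def
    by (simp only: pmf.map_comp o_def) (rule pmf.map_cong[OF refl], auto)
qed

section \<open>Entropy of answers\<close>

lemma card_VecSet: "card (VecSet r) = 2 ^ (2 ^ r - 1)"
proof -
  have c2: "card (UNIV :: bit set) = 2" by (simp add: bit_UNIV)
  have "{} \<in> Sub r" unfolding Sub_def by simp
  then have cNE: "card (NE r) = 2 ^ r - 1" unfolding NE_def by (simp add: card_Sub)
  show ?thesis unfolding VecSet_def by (simp add: card_PiE c2 cNE)
qed

lemma answer_support:
  "set_pmf (answer_pmf K L (Qd N r) (Ans N r) i \<theta>) \<subseteq> to_nat_on (VecSet r) ` VecSet r"
  unfolding answer_pmf_def Ans_def using vec_VecSet by auto

lemma answer_entropy_le:
  "entropy2 (answer_pmf K L (Qd N r) (Ans N r) i \<theta>) \<le> real (2 ^ r) - 1"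
proof -
  let ?p = "answer_pmf K L (Qd N r) (Ans N r) i \<theta>"
  have fin: "finite (set_pmf ?p)"
    using answer_support finite_subset by (metis finite_VecSet finite_imageI)
  have "card (set_pmf ?p) \<le> card (to_nat_on (VecSet r) ` VecSet r)"
    using answer_support by (intro card_mono) auto
  also have "\<dots> \<le> card (VecSet r)" by (rule card_image_le) simp
  finally have c: "card (set_pmf ?p) \<le> 2 ^ (2 ^ r - 1)" by (simp add: card_VecSet)
  have cpos: "0 < card (set_pmf ?p)" using fin set_pmf_not_empty by (simp add: card_gt_0_iff)
  have "entropy2 ?p \<le> log 2 (real (card (set_pmf ?p)))" by (rule entropy2_le_log_card[OF fin])
  also have "\<dots> \<le> log 2 (real ((2::nat) ^ (2 ^ r - 1)))"
    using c cpos by (subst log_le_cancel_iff) simp_all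
  also have "\<dots> = real (2 ^ r - 1)" by (simp add: log_nat_power)
  also have "\<dots> = real (2 ^ r) - 1" by (simp add: of_nat_diff)
  finally show ?thesis .
qed

lemma finite_file_space[simp]: "finite (file_space K L)"
  unfolding file_space_def by (intro finite_PiE) (simp_all add: finite_list_length)

definition Wc :: "nat \<Rightarrow> nat \<Rightarrow> bool \<Rightarrow> nat \<Rightarrow> bool list" where
  "Wc K L c = restrict (\<lambda>_. replicate L c) {0..<K}"

lemma Wc_file_space: "Wc K L c \<in> file_space K L"
  unfolding Wc_def file_space_def by (simp add: restrict_PiE_iff)

lemma file_space_nonempty[simp]: "file_space K L \<noteq> {}"
  using Wc_file_space by blast

lemma set_files_pmf[simp]: "set_pmf (files_pmf K L) = file_space K L"
  unfolding files_pmf_def by simp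

lemma answer_entropy_pos:
  assumes N: "2 \<le> N" and r: "0 < r"
  shows "0 < entropy2 (answer_pmf (r * (N - 1)) (2 ^ r) (Qd N r) (Ans N r) 0 0)"
proof -
  let ?K = "r * (N - 1)"
  let ?p = "answer_pmf ?K (2 ^ r) (Qd N r) (Ans N r) 0 0"
  have fin: "finite (set_pmf ?p)"
    using answer_support finite_subset by (metis finite_VecSet finite_imageI)
  obtain g where g: "g \<in> Gset N r" using Gset_nonempty by blast
  have mem: "Ans N r 0 (Qfun N r 0 g 0) (Wc ?K (2 ^ r) c) \<in> set_pmf ?p" for c
  proof -
    have "(Qfun N r 0 g, Wc ?K (2 ^ r) c) \<in> set_pmf (joint_pmf ?K (2 ^ r) (Qd N r) 0)"
      unfolding joint_pmf_def Qd_def using g Wc_file_space[of ?K "2^r" c]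
      by (simp add: finite_Gset Gset_nonempty)
    then show ?thesis unfolding answer_pmf_def by force
  qed
  have N0: "0 < N" "0 < N - 1" using N by auto
  have \<sigma>: "g 0 \<in> Perms r" using Gset_mem[OF g N0(2)] .
  have s0: "{0} \<in> Sub r" "{0} \<in> NE r" using r unfolding NE_def Sub_def by auto
  have lt: "g 0 {0} < 2 ^ r" using \<sigma> s0 unfolding Perms_def by (auto simp: bij_betw_def)
  have K0: "0 < ?K" using r N0 by simp
  have val: "avec N r 0 (lq r 0 g 0) (rq N r g 0) (Wc ?K (2 ^ r) c) {0} = bz c" for c
  proof -
    have "Pv r 0 (g 0) {0} (Wc ?K (2 ^ r) c) = bz c"
      unfolding Pv_single using lt K0 by (simp add: Wc_def)
    then show ?thesis unfolding avec_def rq_def using s0 N0 by simp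
  qed
  have ne: "Ans N r 0 (Qfun N r 0 g 0) (Wc ?K (2 ^ r) False) \<noteq> Ans N r 0 (Qfun N r 0 g 0) (Wc ?K (2 ^ r) True)"
  proof
    assume "Ans N r 0 (Qfun N r 0 g 0) (Wc ?K (2 ^ r) False) = Ans N r 0 (Qfun N r 0 g 0) (Wc ?K (2 ^ r) True)"
    then have "avec N r 0 (lq r 0 g 0) (rq N r g 0) (Wc ?K (2 ^ r) False)
             = avec N r 0 (lq r 0 g 0) (rq N r g 0) (Wc ?K (2 ^ r) True)"
      using Ans_Qfun[OF g N0(1) r] inj_on_to_nat_on[of "VecSet r"] vec_VecSet
      by (simp add: inj_on_eq_iff countable_finite)
    then have "bz False = bz True" using val by metis
    then show False unfolding bz_def by simp
  qed
  show ?thesis by (rule entropy2_pos[OF fin mem mem ne])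
qed

theorem mainTheorem4:
  fixes N r :: nat
  assumes "N \<ge> 2" and "r \<ge> 1"
  shows "pir_capacity N (path_edges N) r \<ge> ereal (2 / real N * (1 / (2 - 1 / 2 ^ (r - 1))))"
proof -
  have N: "2 \<le> N" using assms(1) .
  have r: "0 < r" using assms(2) by simp
  let ?E = "path_edges N"
  let ?K = "num_files ?E r"
  let ?L = "(2::nat) ^ r"
  have Keq: "?K = r * (N - 1)" unfolding num_files_def by simp
  have Kpos: "0 < ?K" using Keq r N by simp
  have F1: "\<forall>\<theta><?K. finite (set_pmf (Qd N r \<theta>)) \<and> (\<forall>q\<in>set_pmf (Qd N r \<theta>). \<forall>i\<ge>N. q i = 0)"
    unfolding Qd_def Qfun_def by (simp add: finite_Gset Gset_nonempty)
  have F2: "\<forall>i<N. \<forall>q. \<forall>W\<in>file_space ?K ?L. \<forall>W'\<in>file_space ?K ?L.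
        (\<forall>k. stored ?E r k i \<longrightarrow> W k = W' k) \<longrightarrow> Ans N r i q W = Ans N r i q W'"
    using Ans_local[OF r] by blast
  have F3: "\<forall>\<theta><?K. \<forall>q\<in>set_pmf (Qd N r \<theta>). \<forall>W\<in>file_space ?K ?L.
        Dec N r \<theta> q (\<lambda>i. if i < N then Ans N r i (q i) W else 0) = W \<theta>"
  proof (intro allI impI ballI)
    fix \<theta> q W
    assume th: "\<theta> < ?K" and q: "q \<in> set_pmf (Qd N r \<theta>)" and W: "W \<in> file_space ?K ?L"
    obtain g where g: "g \<in> Gset N r" and qg: "q = Qfun N r \<theta> g"
      using q unfolding Qd_def by (auto simp: finite_Gset Gset_nonempty)
    let ?a = "\<lambda>i. if i < N then Ans N r i (q i) W else 0"
    have ex: "\<exists>w. \<exists>W'\<in>file_space ?K ?L. (\<lambda>i. if i < N then Ans N r i (q i) W' else 0) = ?a \<and> w = W' \<theta>"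
      using W by blast
    obtain W' where W': "W' \<in> file_space ?K ?L"
      and aeq: "(\<lambda>i. if i < N then Ans N r i (q i) W' else 0) = ?a" and dec: "Dec N r \<theta> q ?a = W' \<theta>"
      using someI_ex[OF ex] unfolding Dec_def by blast
    have eqs: "\<forall>i<N. Ans N r i (Qfun N r \<theta> g i) W = Ans N r i (Qfun N r \<theta> g i) W'"
    proof (intro allI impI)
      fix i assume "i < N"
      then show "Ans N r i (Qfun N r \<theta> g i) W = Ans N r i (Qfun N r \<theta> g i) W'"
        using fun_cong[OF aeq, of i] qg by simp
    qed
    have lW: "length (W \<theta>) = 2 ^ r" "length (W' \<theta>) = 2 ^ r"
      using W W' th unfolding file_space_def by (auto simp: PiE_iff)
    have "W \<theta> = W' \<theta>" using decode_unique[OF N r _ g lW eqs] th Keq by simp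
    then show "Dec N r \<theta> q ?a = W \<theta>" using dec by simp
  qed
  have F4: "\<forall>i<N. \<forall>\<theta><?K. \<forall>\<theta>'<?K. server_view ?E r ?L (Qd N r) (Ans N r) i \<theta> = server_view ?E r ?L (Qd N r) (Ans N r) i \<theta>'"
  proof (intro allI impI)
    fix i \<theta> \<theta>' assume i: "i < N" and t: "\<theta> < ?K" and t': "\<theta>' < ?K"
    show "server_view ?E r ?L (Qd N r) (Ans N r) i \<theta> = server_view ?E r ?L (Qd N r) (Ans N r) i \<theta>'"
      unfolding server_view_alt using marg_eq[OF N r _ i] t t' Keq by simp
  qed
  have scheme: "pir_scheme N ?E r ?L (Qd N r) (Ans N r) (Dec N r)"
    unfolding pir_scheme_def Let_def using F1 F2 F3 F4 by blast
  define S where "S \<theta> = (\<Sum>i<N. entropy2 (answer_pmf ?K ?L (Qd N r) (Ans N r) i \<theta>))" for \<theta>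
  have Sle: "S \<theta> \<le> real N * (real (2 ^ r) - 1)" for \<theta>
  proof -
    have "S \<theta> \<le> (\<Sum>i<N. real (2 ^ r) - 1)"
      unfolding S_def by (intro sum_mono answer_entropy_le)
    then show ?thesis by simp
  qed
  have Spos: "0 < S 0"
    unfolding S_def
  proof (rule sum_pos2[of "{..<N}" 0])
    show "0 < entropy2 (answer_pmf ?K ?L (Qd N r) (Ans N r) 0 0)"
      using answer_entropy_pos[OF N r] Keq by simp
  qed (use N in \<open>auto intro: entropy2_nonneg\<close>)
  define M where "M = (MAX \<theta>\<in>{0..<?K}. S \<theta>)"
  have Mge: "S 0 \<le> M" unfolding M_def using Kpos by (intro Max_ge) auto
  have Mle: "M \<le> real N * (real (2 ^ r) - 1)" unfolding M_def using Kpos Sle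
    by (subst Max_le_iff) auto
  have Mpos: "0 < M" using Spos Mge by simp
  have rate: "pir_rate N ?E r ?L (Qd N r) (Ans N r) = real (2 ^ r) / M"
    unfolding pir_rate_def M_def S_def by simp
  have "real (2 ^ r) / (real N * (real (2 ^ r) - 1)) \<le> real (2 ^ r) / M"
    using Mpos Mle by (intro divide_left_mono) auto
  moreover have "2 / real N * (1 / (2 - 1 / 2 ^ (r - 1))) = real (2 ^ r) / (real N * (real (2 ^ r) - 1))"
  proof -
    define t where "t = (2::real) ^ (r - 1)"
    have p: "real (2 ^ r) = 2 * t" unfolding t_def using r by (cases r) auto
    have t: "t \<ge> 1" unfolding t_def by simp
    have d: "2 * t - 1 > 0" using t by linarith
    have Np: "real N > 0" using N by simp
    have "2 - 1 / t = (2 * t - 1) / t" using t by (simp add: field_simps)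
    then have "2 / real N * (1 / (2 - 1 / t)) = 2 * t / (real N * (2 * t - 1))"
      using t d Np by (simp add: field_simps)
    then show ?thesis unfolding p t_def by simp
  qed
  ultimately have le: "2 / real N * (1 / (2 - 1 / 2 ^ (r - 1))) \<le> pir_rate N ?E r ?L (Qd N r) (Ans N r)"
    using rate by simp
  have mem: "ereal (pir_rate N ?E r ?L (Qd N r) (Ans N r)) \<in> {ereal (pir_rate N ?E r L Qd Ans) | L Qd Ans Dec.
       L > 0 \<and> pir_scheme N ?E r L Qd Ans Dec}"
    using scheme by fastforce
  have "ereal (2 / real N * (1 / (2 - 1 / 2 ^ (r - 1)))) \<le> ereal (pir_rate N ?E r ?L (Qd N r) (Ans N r))"
    using le by simp
  also have "\<dots> \<le> pir_capacity N ?E r" unfolding pir_capacity_def by (rule Sup_upper[OF mem])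
  finally show ?thesis .
qed

end
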